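(* Suppose $\Xi\in\mathcal{M}_p^{C,\kappa}(\underline{\mathcal{U}})$ for some $C\in(0,\infty)$ and $\kappa\in(0,1)$. Then for every $x\in\mathcal{X}$, $\sum_{t\le-1}w_t\,\mathbb{E}_{\mathbf{U}\sim\Xi}[d_{\mathcal{X}}(f(x,U_t),x)^p]<\infty$.
   Context: $p\in[1,\infty)$ fixed; $\mathbb{Z}_-=\{\dots,-2,-1\}$. Spaces carry Borel $\sigma$-algebras and products carry product topologies; $P(\mathcal{Y})$ denotes Borel probability measures, $P_p(\mathcal{Y})$ those with finite $p$-th moment for a metric space. $\mathcal{Z},\mathcal{U}$ Polish; $(\mathcal{X},d_{\mathcal{X}})$ Polish with complete metric; $f:\mathcal{X}\times\mathcal{U}\to\mathcal{X}$ continuous. $\underline{\mathcal{Z}}=\mathcal{Z}^{\mathbb{Z}_-}$ (product topology); $V:\underline{\mathcal{Z}}\to\mathcal{U}^{\mathbb{Z}_-}$ continuous and causal (if $z_s=z'_s$ for all $s\le t$ then $V(\mathbf{z})_t=V(\mathbf{z}')_t$); $\underline{\mathcal{U}}=V(\underline{\mathcal{Z}})$ Polish with a metric $d_{\underline{\mathcal{U}}}$ inducing its topology. $\mathbf{w}=(w_t)_{t\le-1}\subseteq(0,1)$ monotone, $\sum_tw_t=1$, $\sup_{n\ge1}(\sup_tw_t/w_{t-n})^{1/n}<\infty$. Fix $x_*\in\mathcal{X}$. $\Theta\in P(\underline{\mathcal{Z}})$ has $\kappa$-contractive marginals if for $\mathbf{Z}\sim\Theta$, a.s. for all $x_1,x_2\in\mathcal{X}$,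 $t\le-1$: $\mathbb{E}[d_{\mathcal{X}}(f(x_1,V(\mathbf{Z})_t),f(x_2,V(\mathbf{Z})_t))^p\mid(Z_s)_{s\le t-1}]\le\kappa d_{\mathcal{X}}(x_1,x_2)^p$. $\Xi\in P(\underline{\mathcal{U}})$ is $C$-bounded if $\sum_tw_t\mathbb{E}_{\mathbf{U}\sim\Xi}[d_{\mathcal{X}}(f(x_*,U_t),x_* )^p]\le C$. $\mathcal{M}_p^{C,\kappa}(\underline{\mathcal{U}})$: the $C$-bounded $\Xi\in P_p(\underline{\mathcal{U}})$ with $\Xi=V_*\Theta$ for some $\Theta\in P(\underline{\mathcal{Z}})$ with independent coordinates and $\kappa$-contractive marginals. *)

theory Defs
  imports "HOL-Analysis.Analysis" "HOL-Probability.Probability"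
begin

text \<open>Time convention: the index set Z_- = {..., -2, -1} is encoded by nat,
  with n :: nat standing for the time t = -1 - n.  So sequences indexed by
  Z_- are functions nat => _, "s <= t" corresponds to "m >= n", and
  w_{t-k} corresponds to w (n + k).\<close>

definition causal :: "((nat \<Rightarrow> 'z) \<Rightarrow> (nat \<Rightarrow> 'u)) \<Rightarrow> bool" where
  "causal V \<longleftrightarrow> (\<forall>z z' n. (\<forall>m\<ge>n. z m = z' m) \<longrightarrow> V z n = V z' n)"

definition admissible_weights :: "(nat \<Rightarrow> real) \<Rightarrow> bool" where
  "admissible_weights w \<longleftrightarrow>
     (\<forall>n. 0 < w n \<and> w n < 1) \<and> (mono w \<or> antimono w) \<and> w sums 1 \<and>
     (\<exists>B. \<forall>k\<ge>1. bdd_above (range (\<lambda>n. w n / w (n + k))) \<and>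
                 (SUP n. w n / w (n + k)) powr (1 / real k) \<le> B)"

text \<open>The sigma-algebra generated by the past (Z_s)_{s <= t-1}, where t = -1-n;
  i.e. generated by the coordinates m with m > n.\<close>
definition past_algebra :: "(nat \<Rightarrow> 'z::topological_space) measure \<Rightarrow> nat \<Rightarrow> (nat \<Rightarrow> 'z) measure" where
  "past_algebra \<Theta> n =
     sigma (space \<Theta>) {{z \<in> space \<Theta>. z m \<in> A} | m A. n < m \<and> A \<in> sets borel}"

definition kappa_contractive_marginals ::
  "real \<Rightarrow> real \<Rightarrow> ('x::metric_space \<times> 'u \<Rightarrow> 'x) \<Rightarrow> ((nat \<Rightarrow> 'z::topological_space) \<Rightarrow> (nat \<Rightarrow> 'u))
    \<Rightarrow> (nat \<Rightarrow> 'z) measure \<Rightarrow> bool" where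
  "kappa_contractive_marginals p \<kappa> f V \<Theta> \<longleftrightarrow>
     (\<forall>x1 x2 n. AE z in \<Theta>.
        nn_cond_exp \<Theta> (past_algebra \<Theta> n)
          (\<lambda>z. ennreal (dist (f (x1, V z n)) (f (x2, V z n)) powr p)) z
        \<le> ennreal (\<kappa> * dist x1 x2 powr p))"

definition C_bounded ::
  "real \<Rightarrow> (nat \<Rightarrow> real) \<Rightarrow> ('x::metric_space \<times> 'u \<Rightarrow> 'x) \<Rightarrow> 'x \<Rightarrow> real \<Rightarrow> (nat \<Rightarrow> 'u) measure \<Rightarrow> bool" where
  "C_bounded p w f xs C \<Xi> \<longleftrightarrow>
     (\<Sum>n. ennreal (w n) * (\<integral>\<^sup>+ u. ennreal (dist (f (xs, u n)) xs powr p) \<partial>\<Xi>)) \<le> ennreal C"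

definition in_P_p ::
  "real \<Rightarrow> (nat \<Rightarrow> 'u::topological_space) set \<Rightarrow> ((nat \<Rightarrow> 'u) \<Rightarrow> (nat \<Rightarrow> 'u) \<Rightarrow> real)
    \<Rightarrow> (nat \<Rightarrow> 'u) measure \<Rightarrow> bool" where
  "in_P_p p Uu dU \<Xi> \<longleftrightarrow>
     prob_space \<Xi> \<and> sets \<Xi> = sets (restrict_space borel Uu) \<and>
     (\<exists>u0\<in>Uu. (\<integral>\<^sup>+ u. ennreal (dU u u0 powr p) \<partial>\<Xi>) < \<infinity>)"

definition in_M_p ::
  "real \<Rightarrow> real \<Rightarrow> real \<Rightarrow> (nat \<Rightarrow> real) \<Rightarrow> ('x::metric_space \<times> 'u::topological_space \<Rightarrow> 'x) \<Rightarrow> 'x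
    \<Rightarrow> ((nat \<Rightarrow> 'z::topological_space) \<Rightarrow> (nat \<Rightarrow> 'u)) \<Rightarrow> (nat \<Rightarrow> 'u) set
    \<Rightarrow> ((nat \<Rightarrow> 'u) \<Rightarrow> (nat \<Rightarrow> 'u) \<Rightarrow> real) \<Rightarrow> (nat \<Rightarrow> 'u) measure \<Rightarrow> bool" where
  "in_M_p p C \<kappa> w f xs V Uu dU \<Xi> \<longleftrightarrow>
     C_bounded p w f xs C \<Xi> \<and> in_P_p p Uu dU \<Xi> \<and>
     (\<exists>\<Theta>. prob_space \<Theta> \<and> sets \<Theta> = sets (borel :: (nat \<Rightarrow> 'z) measure) \<and>
          prob_space.indep_vars \<Theta> (\<lambda>_. borel) (\<lambda>n z. z n) UNIV \<and>
          kappa_contractive_marginals p \<kappa> f V \<Theta> \<and>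
          \<Xi> = distr \<Theta> (restrict_space borel Uu) V)"

end

theory Submission
  imports Defs
begin

lemma powr3_bound:
  fixes a b c p :: real
  assumes "0 \<le> a" "0 \<le> b" "0 \<le> c" "0 < p"
  shows "(a + b + c) powr p \<le> 3 powr p * (a powr p + b powr p + c powr p)"
proof -
  define m where "m = max a (max b c)"
  have m0: "0 \<le> m" using assms by (simp add: m_def)
  have "(a + b + c) powr p \<le> (3 * m) powr p"
    by (rule powr_mono2) (use assms in \<open>auto simp: m_def\<close>)
  also have "\<dots> = 3 powr p * m powr p" using m0 by (simp add: powr_mult)
  also have "m powr p \<le> a powr p + b powr p + c powr p"
  proof -
    have "m = a \<or> m = b \<or> m = c" by (auto simp: m_def max_def)
    moreover have "0 \<le> a powr p" "0 \<le> b powr p" "0 \<le> c powr p" by auto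
    ultimately show ?thesis by auto
  qed
  hence "3 powr p * m powr p \<le> 3 powr p * (a powr p + b powr p + c powr p)"
    by (intro mult_left_mono) auto
  finally show ?thesis .
qed

theorem lemmaB3:
  fixes p C \<kappa> :: real
    and f :: "'x::polish_space \<times> 'u::polish_space \<Rightarrow> 'x"
    and V :: "(nat \<Rightarrow> 'z::polish_space) \<Rightarrow> (nat \<Rightarrow> 'u)"
    and Uu :: "(nat \<Rightarrow> 'u) set"
    and dU :: "(nat \<Rightarrow> 'u) \<Rightarrow> (nat \<Rightarrow> 'u) \<Rightarrow> real"
    and w :: "nat \<Rightarrow> real"
    and xs :: 'x
    and \<Xi> :: "(nat \<Rightarrow> 'u) measure"
  assumes p: "1 \<le> p"
    and f_cont: "continuous_on UNIV f"
    and V_cont: "continuous_on UNIV V"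
    and V_causal: "causal V"
    and Uu_def: "Uu = range V"
    and Uu_Polish: "completely_metrizable_space (subtopology euclidean Uu)"
                   "separable_space (subtopology euclidean Uu)"
    and dU_metric: "Metric_space Uu dU"
    and dU_top: "Metric_space.mtopology Uu dU = subtopology euclidean Uu"
    and w: "admissible_weights w"
    and C: "0 < C" and \<kappa>: "0 < \<kappa>" "\<kappa> < 1"
    and \<Xi>: "in_M_p p C \<kappa> w f xs V Uu dU \<Xi>"
  shows "\<forall>x. (\<Sum>n. ennreal (w n) * (\<integral>\<^sup>+ u. ennreal (dist (f (x, u n)) x powr p) \<partial>\<Xi>)) < \<infinity>"
proof
  fix x :: 'x
  obtain \<Theta> :: "(nat \<Rightarrow> 'z) measure" where \<Theta>: "prob_space \<Theta>" "sets \<Theta> = sets (borel :: (nat \<Rightarrow> 'z) measure)"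
    "kappa_contractive_marginals p \<kappa> f V \<Theta>" "\<Xi> = distr \<Theta> (restrict_space borel Uu) V"
    using \<Xi> unfolding in_M_p_def by blast
  have Cb: "(\<Sum>n. ennreal (w n) * (\<integral>\<^sup>+ u. ennreal (dist (f (xs, u n)) xs powr p) \<partial>\<Xi>)) \<le> ennreal C"
    using \<Xi> unfolding in_M_p_def C_bounded_def by blast
  interpret P: prob_space \<Theta> by fact
  have p0: "0 < p" using p by simp
  have Vm: "V \<in> borel_measurable \<Theta>"
    using borel_measurable_continuous_onI[OF V_cont] measurable_cong_sets[OF \<Theta>(2) refl] by metis
  have VmU: "V \<in> measurable \<Theta> (restrict_space borel Uu)"
    by (rule measurable_restrict_space2) (use Vm Uu_def in auto)
  have coord_m: "(\<lambda>z::nat\<Rightarrow>'z. z m) \<in> borel_measurable \<Theta>" for m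
    using borel_measurable_continuous_onI[OF continuous_on_product_coordinates]
      measurable_cong_sets[OF \<Theta>(2) refl] by metis
  have fc: "continuous_on UNIV (\<lambda>u::nat\<Rightarrow>'u. f (y, u n))" for y n
    by (rule continuous_on_compose2[OF f_cont]) (auto intro!: continuous_intros continuous_on_product_coordinates)
  have fm: "(\<lambda>u::nat\<Rightarrow>'u. f (y, u n)) \<in> borel_measurable borel" for y n
    by (rule borel_measurable_continuous_onI[OF fc])
  have hm: "(\<lambda>u::nat\<Rightarrow>'u. ennreal (dist (f (y, u n)) y' powr p)) \<in> borel_measurable borel" for y y' n
    using fm[of y n] by measurable
  have hm2: "(\<lambda>u::nat\<Rightarrow>'u. ennreal (dist (f (y, u n)) (f (y', u n)) powr p)) \<in> borel_measurable borel" for y y' n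
    using fm[of y n] fm[of y' n] by measurable
  have distr_eq: "(\<integral>\<^sup>+ u. ennreal (dist (f (y, u n)) y' powr p) \<partial>\<Xi>)
      = (\<integral>\<^sup>+ z. ennreal (dist (f (y, V z n)) y' powr p) \<partial>\<Theta>)" for y y' n
    unfolding \<Theta>(4)
    by (rule nn_integral_distr[OF VmU]) (simp add: measurable_restrict_space1[OF hm])
  have g1m: "(\<lambda>z. ennreal (dist (f (y, V z n)) (f (y', V z n)) powr p)) \<in> borel_measurable \<Theta>" for y y' n
    using measurable_comp[OF Vm hm2[of y n y']] by (simp add: o_def)
  have g2m: "(\<lambda>z. ennreal (dist (f (y, V z n)) y' powr p)) \<in> borel_measurable \<Theta>" for y y' n
    using measurable_comp[OF Vm hm[of y n y']] by (simp add: o_def)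
  have contr: "(\<integral>\<^sup>+ z. ennreal (dist (f (x, V z n)) (f (xs, V z n)) powr p) \<partial>\<Theta>) \<le> ennreal (\<kappa> * dist x xs powr p)" for n
  proof -
    define F where "F = past_algebra \<Theta> n"
    define G where "G = {{z \<in> space \<Theta>. z m \<in> A} | m A. n < m \<and> A \<in> sets (borel :: 'z measure)}"
    have GP: "G \<subseteq> Pow (space \<Theta>)" unfolding G_def by auto
    have GS: "G \<subseteq> sets \<Theta>"
    proof
      fix X assume "X \<in> G"
      then obtain m A where X: "X = {z \<in> space \<Theta>. z m \<in> A}" "A \<in> sets (borel :: 'z measure)"
        unfolding G_def by blast
      have "(\<lambda>z. z m) -` A \<inter> space \<Theta> \<in> sets \<Theta>" by (rule measurable_sets[OF coord_m X(2)])
      moreover have "(\<lambda>z. z m) -` A \<inter> space \<Theta> = X" using X by auto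
      ultimately show "X \<in> sets \<Theta>" by simp
    qed
    have sub: "subalgebra \<Theta> F"
      unfolding subalgebra_def F_def past_algebra_def
      using GP GS unfolding G_def[symmetric]
      by (simp add: space_measure_of_conv sigma_le_sets sets.sigma_sets_subset)
    interpret S: finite_measure_subalgebra \<Theta> F
      by unfold_locales (rule sub)
    have AE: "AE z in \<Theta>. nn_cond_exp \<Theta> F (\<lambda>z. ennreal (dist (f (x, V z n)) (f (xs, V z n)) powr p)) z
        \<le> ennreal (\<kappa> * dist x xs powr p)"
      using \<Theta>(3) unfolding kappa_contractive_marginals_def F_def by blast
    have "(\<integral>\<^sup>+ z. ennreal (dist (f (x, V z n)) (f (xs, V z n)) powr p) \<partial>\<Theta>)
        = (\<integral>\<^sup>+ z. 1 * ennreal (dist (f (x, V z n)) (f (xs, V z n)) powr p) \<partial>\<Theta>)" by simp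
    also have "\<dots> = (\<integral>\<^sup>+ z. 1 * nn_cond_exp \<Theta> F (\<lambda>z. ennreal (dist (f (x, V z n)) (f (xs, V z n)) powr p)) z \<partial>\<Theta>)"
      by (rule S.nn_cond_exp_intg[symmetric]) (simp_all add: g1m[of x n xs])
    also have "\<dots> \<le> (\<integral>\<^sup>+ z. ennreal (\<kappa> * dist x xs powr p) \<partial>\<Theta>)"
      by (rule nn_integral_mono_AE) (use AE in auto)
    also have "\<dots> = ennreal (\<kappa> * dist x xs powr p)"
      by (simp add: P.emeasure_space_1)
    finally show ?thesis .
  qed
  define K where "K = ennreal (\<kappa> * dist x xs powr p) + ennreal (dist xs x powr p)"
  define J where "J n = (\<integral>\<^sup>+ u. ennreal (dist (f (xs, u n)) xs powr p) \<partial>\<Xi>)" for n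
  have key: "(\<integral>\<^sup>+ u. ennreal (dist (f (x, u n)) x powr p) \<partial>\<Xi>) \<le> ennreal (3 powr p) * (K + J n)" for n
  proof -
    let ?g1 = "\<lambda>z. ennreal (dist (f (x, V z n)) (f (xs, V z n)) powr p)"
    let ?g2 = "\<lambda>z. ennreal (dist (f (xs, V z n)) xs powr p)"
    let ?D = "ennreal (dist xs x powr p)"
    have pw: "ennreal (dist (f (x, V z n)) x powr p) \<le> ennreal (3 powr p) * (?g1 z + ?g2 z + ?D)" for z
    proof -
      have "dist (f (x, V z n)) x \<le> dist (f (x, V z n)) (f (xs, V z n)) + dist (f (xs, V z n)) xs + dist xs x"
        by (metis dist_triangle add.assoc order_trans add_left_mono)
      hence "dist (f (x, V z n)) x powr p \<le> (dist (f (x, V z n)) (f (xs, V z n)) + dist (f (xs, V z n)) xs + dist xs x) powr p"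
        by (intro powr_mono2) (use p0 in auto)
      also have "\<dots> \<le> 3 powr p * (dist (f (x, V z n)) (f (xs, V z n)) powr p + dist (f (xs, V z n)) xs powr p + dist xs x powr p)"
        by (rule powr3_bound) (use p0 in auto)
      finally have H: "dist (f (x, V z n)) x powr p \<le> 3 powr p * (dist (f (x, V z n)) (f (xs, V z n)) powr p + dist (f (xs, V z n)) xs powr p + dist xs x powr p)" .
      have "ennreal (3 powr p * (dist (f (x, V z n)) (f (xs, V z n)) powr p + dist (f (xs, V z n)) xs powr p + dist xs x powr p))
          = ennreal (3 powr p) * (?g1 z + ?g2 z + ?D)"
        by (simp add: ennreal_mult ennreal_plus)
      with ennreal_leI[OF H] show ?thesis by simp
    qed
    have "(\<integral>\<^sup>+ u. ennreal (dist (f (x, u n)) x powr p) \<partial>\<Xi>) = (\<integral>\<^sup>+ z. ennreal (dist (f (x, V z n)) x powr p) \<partial>\<Theta>)"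
      by (rule distr_eq)
    also have "\<dots> \<le> (\<integral>\<^sup>+ z. ennreal (3 powr p) * (?g1 z + ?g2 z + ?D) \<partial>\<Theta>)"
      by (rule nn_integral_mono) (rule pw)
    also have "\<dots> = ennreal (3 powr p) * (\<integral>\<^sup>+ z. (?g1 z + ?g2 z + ?D) \<partial>\<Theta>)"
      by (rule nn_integral_cmult) (intro borel_measurable_add g1m[of x n xs] g2m[of xs n xs] borel_measurable_const)
    also have "(\<integral>\<^sup>+ z. (?g1 z + ?g2 z + ?D) \<partial>\<Theta>) = (\<integral>\<^sup>+ z. ?g1 z \<partial>\<Theta>) + (\<integral>\<^sup>+ z. ?g2 z \<partial>\<Theta>) + ?D"
      using g1m g2m by (simp add: nn_integral_add P.emeasure_space_1)
    also have "(\<integral>\<^sup>+ z. ?g2 z \<partial>\<Theta>) = J n" unfolding J_def by (rule distr_eq[symmetric])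
    finally have "(\<integral>\<^sup>+ u. ennreal (dist (f (x, u n)) x powr p) \<partial>\<Xi>)
        \<le> ennreal (3 powr p) * ((\<integral>\<^sup>+ z. ?g1 z \<partial>\<Theta>) + J n + ?D)" .
    also have "\<dots> \<le> ennreal (3 powr p) * (K + J n)"
      unfolding K_def
      by (intro mult_left_mono) (use contr[of n] in \<open>auto simp: algebra_simps intro: add_right_mono\<close>)
    finally show ?thesis .
  qed
  have wsum: "(\<Sum>n. ennreal (w n)) = ennreal 1"
  proof -
    have w0: "\<And>n. 0 \<le> w n" and ws: "w sums 1" using w unfolding admissible_weights_def by (auto simp: less_imp_le)
    have "(\<lambda>n. ennreal (w n)) sums ennreal 1" using ws w0 sums_ennreal[of w 1] by simp
    thus ?thesis by (rule sums_unique[symmetric])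
  qed
  have "(\<Sum>n. ennreal (w n) * (\<integral>\<^sup>+ u. ennreal (dist (f (x, u n)) x powr p) \<partial>\<Xi>))
      \<le> (\<Sum>n. ennreal (3 powr p) * (K * ennreal (w n) + ennreal (w n) * J n))"
  proof (rule suminf_le)
    fix n
    have "ennreal (w n) * (\<integral>\<^sup>+ u. ennreal (dist (f (x, u n)) x powr p) \<partial>\<Xi>) \<le> ennreal (w n) * (ennreal (3 powr p) * (K + J n))"
      by (rule mult_left_mono[OF key]) simp
    also have "\<dots> = ennreal (3 powr p) * (K * ennreal (w n) + ennreal (w n) * J n)"
      by (simp add: algebra_simps)
    finally show "ennreal (w n) * (\<integral>\<^sup>+ u. ennreal (dist (f (x, u n)) x powr p) \<partial>\<Xi>) \<le> ennreal (3 powr p) * (K * ennreal (w n) + ennreal (w n) * J n)" .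
  qed auto
  also have "\<dots> = ennreal (3 powr p) * (K * (\<Sum>n. ennreal (w n)) + (\<Sum>n. ennreal (w n) * J n))"
    by (simp add: suminf_add[symmetric])
  also have "\<dots> \<le> ennreal (3 powr p) * (K * 1 + ennreal C)"
    using Cb unfolding J_def wsum by (intro mult_left_mono add_left_mono) auto
  also have "\<dots> < \<infinity>" unfolding K_def by (simp add: ennreal_mult_less_top)
  finally show "(\<Sum>n. ennreal (w n) * (\<integral>\<^sup>+ u. ennreal (dist (f (x, u n)) x powr p) \<partial>\<Xi>)) < \<infinity>" .
qed

end
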